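(* Let $D=(N,A)$, $\mathcal{K}$, $\{D^k\}_{k\in\mathcal{K}}$ be an instance of SND-RR, let $\mathcal{A}=\{\mathcal{A}_v\}_{v\in N}$ be a valid arc partition for it, and let $G=G(D,\mathcal{A})$ be the auxiliary flat network. Then for each commodity $k\in\mathcal{K}$, the subgraph $G^k$ has the same number of nodes and the same number of arcs as $D^k$.
   Context: An instance of SND-RR has a directed graph $D=(N,A)$, a set $\mathcal{K}$ of commodities each with origin $o_k\in N$ and destination $d_k\in N$, and for each $k$ a subgraph $D^k=(N^k,A^k)\subseteq D$. Standing assumption: for each $k$, $\delta^+_{D^k}(d_k)=\emptyset$, and $\delta^+_{D^k}(v)\neq\emptyset$ for every $v\in N^k\setminus\{d_k\}$ (where $\delta^+_H(v)$ denotes the arcs of $H$ leaving $v$). A partition $\mathcal{A}=\{\mathcal{A}_v\}_{v\in N}$ is valid if for each $v\in N$, $\mathcal{A}_v=\{A_1,\dots,A_r\}$ is a partition of $\delta^+_D(v)$, and for each $k\in\mathcal{K}$ there is $A_i\in\mathcal{A}_v$ with $\delta^+_{D^k}(v)\subseteq A_i$. For each $v\in N$ let $\mathcal{V}(v)=\{v^0,v^1,\dots,v^{|\mathcal{A}_v|}\}$: a copy $v^i$ for each part $A_i\in\mathcal{A}_v$ plus a terminal copy $v^0$. The auxiliary flat network $G=G(D,\mathcal{A})=(V,E)$ has $V=\bigcup_{v\in N}\mathcal{V}(v)$ and $E=\{v^iw^j: vw\in A_i\in\mathcal{A}_v,\ w^j\in\mathcal{V}(w)\}$. For $v\in N$ and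 $A_i\in\mathcal{A}_v$ let $\mathcal{K}(A_i)=\{k\in\mathcal{K}:\emptyset\neq\delta^+_{D^k}(v)\subseteq A_i\}$. For $k\in\mathcal{K}$, $G^k=(V^k,E^k)$ where $V^k=\{v^i: v\in N^k, A_i\in\mathcal{A}_v, k\in\mathcal{K}(A_i)\}\cup\{d_k^0\}$ and $E^k=\{v^iw^j: vw\in A^k, v^i\in V^k, w^j\in V^k\}$. *)

theory Defs
  imports Main "HOL-Library.Disjoint_Sets"
begin

text \<open>Digraphs are given by a node set and an arc set of ordered pairs (v,w).
  A commodity k has origin orig k, destination dest k and routing subgraph
  D^k = (Nk k, Ak k).\<close>

definition out_arcs :: "('a \<times> 'a) set \<Rightarrow> 'a \<Rightarrow> ('a \<times> 'a) set" where
  "out_arcs H v = {e \<in> H. fst e = v}"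

definition snd_rr_instance ::
  "'a set \<Rightarrow> ('a \<times> 'a) set \<Rightarrow> 'k set \<Rightarrow> ('k \<Rightarrow> 'a) \<Rightarrow> ('k \<Rightarrow> 'a)
   \<Rightarrow> ('k \<Rightarrow> 'a set) \<Rightarrow> ('k \<Rightarrow> ('a \<times> 'a) set) \<Rightarrow> bool" where
  "snd_rr_instance N A K orig dest Nk Ak \<longleftrightarrow>
     finite N \<and> A \<subseteq> N \<times> N \<and>
     (\<forall>k\<in>K. orig k \<in> Nk k \<and> dest k \<in> Nk k \<and> Nk k \<subseteq> N \<and> Ak k \<subseteq> A \<and>
        Ak k \<subseteq> Nk k \<times> Nk k \<and>
        out_arcs (Ak k) (dest k) = {} \<and>
        (\<forall>v \<in> Nk k - {dest k}. out_arcs (Ak k) v \<noteq> {}))"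

definition valid_partition ::
  "'a set \<Rightarrow> ('a \<times> 'a) set \<Rightarrow> 'k set \<Rightarrow> ('k \<Rightarrow> ('a \<times> 'a) set)
   \<Rightarrow> ('a \<Rightarrow> ('a \<times> 'a) set set) \<Rightarrow> bool" where
  "valid_partition N A K Ak P \<longleftrightarrow>
     (\<forall>v\<in>N. partition_on (out_arcs A v) (P v) \<and>
        (\<forall>k\<in>K. out_arcs (Ak k) v \<noteq> {} \<longrightarrow> (\<exists>S\<in>P v. out_arcs (Ak k) v \<subseteq> S)))"

text \<open>Copies of v: (v, None) is the terminal copy v^0, (v, Some S) the copy for part S.\<close>
definition G_nodes :: "'a set \<Rightarrow> ('a \<Rightarrow> ('a \<times> 'a) set set) \<Rightarrow> ('a \<times> ('a \<times> 'a) set option) set" where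
  "G_nodes N P = {(v, None) | v. v \<in> N} \<union> {(v, Some S) | v S. v \<in> N \<and> S \<in> P v}"

definition G_arcs :: "'a set \<Rightarrow> ('a \<Rightarrow> ('a \<times> 'a) set set)
   \<Rightarrow> (('a \<times> ('a \<times> 'a) set option) \<times> ('a \<times> ('a \<times> 'a) set option)) set" where
  "G_arcs N P = {((v, Some S), (w, c)) | v S w c.
      v \<in> N \<and> S \<in> P v \<and> (v, w) \<in> S \<and> (w, c) \<in> G_nodes N P}"

definition K_part :: "'k set \<Rightarrow> ('k \<Rightarrow> ('a \<times> 'a) set) \<Rightarrow> 'a \<Rightarrow> ('a \<times> 'a) set \<Rightarrow> 'k set" where
  "K_part K Ak v S = {k \<in> K. out_arcs (Ak k) v \<noteq> {} \<and> out_arcs (Ak k) v \<subseteq> S}"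

definition Gk_nodes :: "'k set \<Rightarrow> ('k \<Rightarrow> 'a) \<Rightarrow> ('k \<Rightarrow> 'a set) \<Rightarrow> ('k \<Rightarrow> ('a \<times> 'a) set)
   \<Rightarrow> ('a \<Rightarrow> ('a \<times> 'a) set set) \<Rightarrow> 'k \<Rightarrow> ('a \<times> ('a \<times> 'a) set option) set" where
  "Gk_nodes K dest Nk Ak P k =
     {(v, Some S) | v S. v \<in> Nk k \<and> S \<in> P v \<and> k \<in> K_part K Ak v S} \<union> {(dest k, None)}"

definition Gk_arcs :: "'a set \<Rightarrow> 'k set \<Rightarrow> ('k \<Rightarrow> 'a) \<Rightarrow> ('k \<Rightarrow> 'a set) \<Rightarrow> ('k \<Rightarrow> ('a \<times> 'a) set)
   \<Rightarrow> ('a \<Rightarrow> ('a \<times> 'a) set set) \<Rightarrow> 'k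
   \<Rightarrow> (('a \<times> ('a \<times> 'a) set option) \<times> ('a \<times> ('a \<times> 'a) set option)) set" where
  "Gk_arcs N K dest Nk Ak P k =
     {(x, y) \<in> G_arcs N P. (fst x, fst y) \<in> Ak k \<and>
        x \<in> Gk_nodes K dest Nk Ak P k \<and> y \<in> Gk_nodes K dest Nk Ak P k}"

end

theory Submission
  imports Defs
begin

theorem lemma1:
  assumes "snd_rr_instance N A K orig dest Nk Ak"
    and "valid_partition N A K Ak P"
    and "k \<in> K"
  shows "card (Gk_nodes K dest Nk Ak P k) = card (Nk k)
       \<and> card (Gk_arcs N K dest Nk Ak P k) = card (Ak k)"
proof -
  note I = assms(1)[unfolded snd_rr_instance_def] and V = assms(2)[unfolded valid_partition_def]
  let ?G = "Gk_nodes K dest Nk Ak P k"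
  have NkN: "Nk k \<subseteq> N" and dk: "dest k \<in> Nk k" and AkA: "Ak k \<subseteq> Nk k \<times> Nk k"
    and dempty: "out_arcs (Ak k) (dest k) = {}"
    and ne: "\<And>v. v \<in> Nk k - {dest k} \<Longrightarrow> out_arcs (Ak k) v \<noteq> {}"
    using I assms(3) by auto
  have ex: "\<exists>S\<in>P v. out_arcs (Ak k) v \<subseteq> S" if "v \<in> Nk k - {dest k}" for v
    using V that NkN ne[OF that] assms(3) by blast
  have uniq: "S = S'" if "v \<in> N" "S \<in> P v" "S' \<in> P v" "out_arcs (Ak k) v \<noteq> {}"
     "out_arcs (Ak k) v \<subseteq> S" "out_arcs (Ak k) v \<subseteq> S'" for v S S'
  proof -
    have "partition_on (out_arcs A v) (P v)" using V that(1) by blast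
    hence "disjoint (P v)" by (simp add: partition_on_def)
    moreover have "S \<inter> S' \<noteq> {}" using that(4-6) by blast
    ultimately show ?thesis using that(2,3) by (meson disjointD)
  qed
  have memG: "x \<in> ?G \<longleftrightarrow> (x = (dest k, None) \<or> (\<exists>v S. x = (v, Some S) \<and> v \<in> Nk k \<and> S \<in> P v
      \<and> out_arcs (Ak k) v \<noteq> {} \<and> out_arcs (Ak k) v \<subseteq> S))" for x
    unfolding Gk_nodes_def K_part_def using assms(3) by auto
  have inj: "inj_on fst ?G"
  proof (rule inj_onI)
    fix x y
    assume x: "x \<in> ?G" and y: "y \<in> ?G" and f: "fst x = fst y"
    obtain v c where xv: "x = (v, c)" by force
    obtain c' where yv: "y = (v, c')" using f xv by (cases y) auto
    have X: "(v, c) = (dest k, None) \<or> (\<exists>S. c = Some S \<and> v \<in> Nk k \<and> S \<in> P v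
      \<and> out_arcs (Ak k) v \<noteq> {} \<and> out_arcs (Ak k) v \<subseteq> S)"
      using x memG[of x] unfolding xv by blast
    have Y: "(v, c') = (dest k, None) \<or> (\<exists>S. c' = Some S \<and> v \<in> Nk k \<and> S \<in> P v
      \<and> out_arcs (Ak k) v \<noteq> {} \<and> out_arcs (Ak k) v \<subseteq> S)"
      using y memG[of y] unfolding yv by blast
    have "c = c'"
    proof (cases "v = dest k")
      case True
      then show ?thesis using X Y dempty by blast
    next
      case False
      then obtain S S' where "c = Some S" "c' = Some S'" "S \<in> P v" "S' \<in> P v"
        "out_arcs (Ak k) v \<noteq> {}" "out_arcs (Ak k) v \<subseteq> S" "out_arcs (Ak k) v \<subseteq> S'" "v \<in> Nk k"
        using X Y by blast
      then show ?thesis using uniq[of v S S'] NkN by blast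
    qed
    then show "x = y" using xv yv by simp
  qed
  have img: "fst ` ?G = Nk k"
  proof
    show "fst ` ?G \<subseteq> Nk k" using dk by (auto simp: memG)
    show "Nk k \<subseteq> fst ` ?G"
    proof
      fix v assume v: "v \<in> Nk k"
      show "v \<in> fst ` ?G"
      proof (cases "v = dest k")
        case True then show ?thesis by (force simp: memG)
      next
        case False
        then obtain S where "S \<in> P v" "out_arcs (Ak k) v \<subseteq> S" using ex v by blast
        then have "(v, Some S) \<in> ?G" using v False ne by (auto simp: memG)
        then show ?thesis by force
      qed
    qed
  qed
  have c1: "card ?G = card (Nk k)" using card_image[OF inj] img by simp
  let ?E = "Gk_arcs N K dest Nk Ak P k"
  let ?h = "\<lambda>(x::('a \<times> ('a \<times> 'a) set option), y::('a \<times> ('a \<times> 'a) set option)). (fst x, fst y)"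
  have Esub: "?E \<subseteq> ?G \<times> ?G" unfolding Gk_arcs_def by auto
  have inj2: "inj_on ?h ?E"
  proof (rule inj_onI)
    fix a b assume ab: "a \<in> ?E" "b \<in> ?E" "?h a = ?h b"
    obtain x1 y1 where a: "a = (x1, y1)" by (rule prod.exhaust)
    obtain x2 y2 where b: "b = (x2, y2)" by (rule prod.exhaust)
    have m: "x1 \<in> ?G" "y1 \<in> ?G" "x2 \<in> ?G" "y2 \<in> ?G" using ab(1,2) Esub a b by auto
    have "fst x1 = fst x2" "fst y1 = fst y2" using ab(3) a b by auto
    hence "x1 = x2" "y1 = y2" using inj m by (meson inj_onD)+
    then show "a = b" using a b by simp
  qed
  have img2: "?h ` ?E = Ak k"
  proof
    show "?h ` ?E \<subseteq> Ak k" unfolding Gk_arcs_def by auto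
    show "Ak k \<subseteq> ?h ` ?E"
    proof
      fix e assume e: "e \<in> Ak k"
      obtain v w where vw: "e = (v, w)" by force
      have v: "v \<in> Nk k" and w: "w \<in> Nk k" using AkA e vw by auto
      have oa: "(v, w) \<in> out_arcs (Ak k) v" using e vw by (simp add: out_arcs_def)
      hence vd: "v \<noteq> dest k" using dempty by auto
      obtain S where S: "S \<in> P v" "out_arcs (Ak k) v \<subseteq> S" using ex v vd by blast
      have x: "(v, Some S) \<in> ?G" using v vd ne S by (auto simp: memG)
      obtain y where y: "y \<in> ?G" "fst y = w" using img w by force
      have yN: "y \<in> G_nodes N P"
        using y(1) NkN dk unfolding memG G_nodes_def by auto
      have "((v, Some S), y) \<in> G_arcs N P"
        unfolding G_arcs_def using v NkN S oa yN y(2) by (cases y) auto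
      hence "((v, Some S), y) \<in> ?E" unfolding Gk_arcs_def using x y e vw by auto
      then show "e \<in> ?h ` ?E" using vw y(2) by force
    qed
  qed
  have c2: "card ?E = card (Ak k)" using card_image[OF inj2] img2 by simp
  show ?thesis using c1 c2 by simp
qed

end
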